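(* Let $n\ge 1$ and let $f_1,\dots,f_n:\mathbb{R}^n\to\mathbb{R}$ be $C^1$ functions such that for all $x\in\mathbb{R}^n$ $$-f_i(x)+\sum_{j=1}^n f_j(x)\frac{\partial f_i}{\partial x_j}(x)=0\quad(1\le i\le n),\qquad \sum_{i,j=1}^n f_{j,i}(x)f_{i,j}(x)=0,\qquad \sum_{i=1}^n f_{i,i}(x)=0 .$$ Then the functions $v_i(t,x):=-\frac{f_i(x)}{1-t}$, $1\le i\le n$, satisfy the incompressible Euler equations on $[0,1)\times\mathbb{R}^n$ with initial data $h_i=-f_i$.
   Context: The incompressible Euler equations on $\mathbb{R}^n$ are $\partial_t v_i+\sum_{j=1}^n v_j\partial_{x_j}v_i=-\partial_{x_i}p$ ($1\le i\le n$), $\sum_{i=1}^n\partial_{x_i}v_i=0$, $v_i(0,x)=h_i(x)$, for a velocity field $v$ and a pressure $p$. Notation: $f_{i,j}:=\partial f_i/\partial x_j$. *)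

theory Defs
  imports "HOL-Analysis.Analysis"
begin

definition has_partial :: "(real^'n \<Rightarrow> real) \<Rightarrow> 'n \<Rightarrow> real^'n \<Rightarrow> bool" where
  "has_partial g j x \<longleftrightarrow> (\<lambda>s. g (x + s *\<^sub>R axis j 1)) differentiable (at 0)"

definition partial :: "(real^'n \<Rightarrow> real) \<Rightarrow> 'n \<Rightarrow> real^'n \<Rightarrow> real" where
  "partial g j x = deriv (\<lambda>s. g (x + s *\<^sub>R axis j 1)) 0"

definition C1_field :: "(real^'n \<Rightarrow> real^'n) \<Rightarrow> bool" where
  "C1_field f \<longleftrightarrow> (\<forall>i j. (\<forall>x. has_partial (\<lambda>y. f y $ i) j x) \<and>
      continuous_on UNIV (\<lambda>x. partial (\<lambda>y. f y $ i) j x))"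

definition euler_solution ::
  "(real \<Rightarrow> real^'n \<Rightarrow> real^'n) \<Rightarrow> (real \<Rightarrow> real^'n \<Rightarrow> real) \<Rightarrow> real set \<Rightarrow> (real^'n \<Rightarrow> real^'n) \<Rightarrow> bool" where
  "euler_solution v p T h \<longleftrightarrow>
     (\<forall>t\<in>T. \<forall>x. \<forall>i.
        (\<exists>dt. ((\<lambda>s. v s x $ i) has_real_derivative dt) (at t within T) \<and>
              (\<forall>j. has_partial (\<lambda>y. v t y $ i) j x) \<and>
              has_partial (p t) i x \<and>
              dt + (\<Sum>j\<in>UNIV. v t x $ j * partial (\<lambda>y. v t y $ i) j x) = - partial (p t) i x)) \<and>
     (\<forall>t\<in>T. \<forall>x. (\<Sum>i\<in>UNIV. partial (\<lambda>y. v t y $ i) i x) = 0) \<and>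
     (\<forall>x. v 0 x = h x)"

end

theory Submission
  imports Defs
begin

lemma partial_scale:
  assumes "has_partial g j x"
  shows "has_partial (\<lambda>y. c * g y) j x \<and> partial (\<lambda>y. c * g y) j x = c * partial g j x"
proof -
  let ?h = "\<lambda>s. g (x + s *\<^sub>R axis j 1)"
  have d: "?h differentiable (at 0)" using assms unfolding has_partial_def .
  then have D: "(?h has_real_derivative deriv ?h 0) (at 0)"
    using DERIV_deriv_iff_real_differentiable by blast
  have "((\<lambda>s. c * ?h s) has_real_derivative c * deriv ?h 0) (at 0)"
    using DERIV_cmult[OF D] by simp
  then show ?thesis unfolding has_partial_def partial_def
    using DERIV_imp_deriv real_differentiable_def by blast
qed

lemma partial_const: "has_partial (\<lambda>y. c) j x \<and> partial (\<lambda>y. c) j x = 0"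
  unfolding has_partial_def partial_def by simp

theorem proposition1p3:
  fixes f :: "real^'n \<Rightarrow> real^'n"
  assumes "C1_field f"
    and "\<And>x i. - f x $ i + (\<Sum>j\<in>UNIV. f x $ j * partial (\<lambda>y. f y $ i) j x) = 0"
    and "\<And>x. (\<Sum>i\<in>UNIV. \<Sum>j\<in>UNIV. partial (\<lambda>y. f y $ j) i x * partial (\<lambda>y. f y $ i) j x) = 0"
    and "\<And>x. (\<Sum>i\<in>UNIV. partial (\<lambda>y. f y $ i) i x) = 0"
  shows "\<exists>p. euler_solution (\<lambda>t x. - (1 / (1 - t)) *\<^sub>R f x) p {0..<1} (\<lambda>x. - f x)"
proof (intro exI)
  have hp: "\<And>i j x. has_partial (\<lambda>y. f y $ i) j x" using assms(1) unfolding C1_field_def by blast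
  have comp: "\<And>t x i. ((- (1 / (1 - t))) *\<^sub>R f x) $ i = - (1 / (1 - t)) * f x $ i" by simp
  have ps: "\<And>t i j x. has_partial (\<lambda>y. ((- (1 / (1 - t))) *\<^sub>R f y) $ i) j x \<and>
      partial (\<lambda>y. ((- (1 / (1 - t))) *\<^sub>R f y) $ i) j x = - (1 / (1 - t)) * partial (\<lambda>y. f y $ i) j x"
    unfolding comp using partial_scale[OF hp] by blast
  have ps2: "\<And>t i j x. partial (\<lambda>y. - (f y $ i / (1 - t))) j x = - (partial (\<lambda>y. f y $ i) j x / (1 - t))"
  proof -
    fix t i j x
    show "partial (\<lambda>y. - (f y $ i / (1 - t))) j x = - (partial (\<lambda>y. f y $ i) j x / (1 - t))"
      using partial_scale[OF hp[of i j x], where c="- (1 / (1 - t))"] by simp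
  qed
  show "euler_solution (\<lambda>t x. - (1 / (1 - t)) *\<^sub>R f x) (\<lambda>t y. 0) {0..<1} (\<lambda>x. - f x)"
    unfolding euler_solution_def
  proof (intro conjI ballI allI)
    fix t :: real and x i assume t: "t \<in> {0..<1}"
    then have t1: "1 - t \<noteq> 0" by auto
    have "((\<lambda>s. - (1 / (1 - s)) * f x $ i) has_real_derivative - (f x $ i / (1 - t)^2)) (at t within {0..<1})"
      using t1 by (auto intro!: derivative_eq_intros simp: power2_eq_square field_simps)
    then have D: "((\<lambda>s. ((- (1 / (1 - s))) *\<^sub>R f x) $ i) has_real_derivative - (f x $ i / (1 - t)^2)) (at t within {0..<1})"
      by simp
    have "(\<Sum>j\<in>UNIV. ((- (1 / (1 - t))) *\<^sub>R f x) $ j * partial (\<lambda>y. ((- (1 / (1 - t))) *\<^sub>R f y) $ i) j x)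
        = (1 / (1 - t))^2 * (\<Sum>j\<in>UNIV. f x $ j * partial (\<lambda>y. f y $ i) j x)"
      by (simp add: ps2 sum_distrib_left power2_eq_square mult_ac)
    also have "\<dots> = (1/(1-t))^2 * f x $ i" using assms(2)[of x i] by simp
    finally have S: "(\<Sum>j\<in>UNIV. ((- (1 / (1 - t))) *\<^sub>R f x) $ j * partial (\<lambda>y. ((- (1 / (1 - t))) *\<^sub>R f y) $ i) j x) = (1/(1-t))^2 * f x $ i" .
    show "\<exists>dt. ((\<lambda>s. ((- (1 / (1 - s))) *\<^sub>R f x) $ i) has_real_derivative dt) (at t within {0..<1}) \<and>
          (\<forall>j. has_partial (\<lambda>y. ((- (1 / (1 - t))) *\<^sub>R f y) $ i) j x) \<and>
          has_partial (\<lambda>y. 0) i x \<and>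
          dt + (\<Sum>j\<in>UNIV. ((- (1 / (1 - t))) *\<^sub>R f x) $ j * partial (\<lambda>y. ((- (1 / (1 - t))) *\<^sub>R f y) $ i) j x) = - partial (\<lambda>y. 0) i x"
      apply (rule exI[of _ "- (f x $ i / (1 - t)^2)"])
      using D ps partial_const[of 0] S by (simp add: power_divide)
  next
    fix t :: real and x assume t: "t \<in> {0..<1}"
    have "(\<Sum>i\<in>UNIV. partial (\<lambda>y. ((- (1 / (1 - t))) *\<^sub>R f y) $ i) i x)
        = - (1 / (1 - t)) * (\<Sum>i\<in>UNIV. partial (\<lambda>y. f y $ i) i x)"
      by (simp add: ps2 sum_distrib_left sum_divide_distrib)
    then show "(\<Sum>i\<in>UNIV. partial (\<lambda>y. ((- (1 / (1 - t))) *\<^sub>R f y) $ i) i x) = 0"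
      using assms(4)[of x] by simp
  next
    fix x show "(- (1 / (1 - 0))) *\<^sub>R f x = - f x" by simp
  qed
qed

end
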